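(* Let $\mathbb{A}\colon\mathbb{R}^d\to\mathbb{R}^d$ be Lipschitz continuous, $X_0\in\mathbb{R}^d$, $T>0$. (i) If $X$ solves the Anchor ODE $\dot X(t)=-\mathbb{A}(X(t))+\frac1t(X_0-X(t))$, $X(0)=X_0$, then $\dot X(t)=-\int_0^t H(t,s)\mathbb{A}(X(s))\,ds$ with H-kernel $H(t,s)=-\frac{s}{t^2}+\delta(s-t)$, i.e. $\dot X(t)=\frac{1}{t^2}\int_0^t s\,\mathbb{A}(X(s))\,ds-\mathbb{A}(X(t))$. (ii) The H-dual ODE, with kernel $H^A(t,s):=H(T-s,T-t)=-\frac{T-t}{(T-s)^2}+\delta(s-t)$, namely $\dot X(t)=\int_0^t\frac{T-t}{(T-s)^2}\mathbb{A}(X(s))\,ds-\mathbb{A}(X(t))$ on $[0,T)$ with $X(0)=X_0$, is the Dual-Anchor ODE: if $X$ solves it and $Z(t):=-\dot X(t)-\mathbb{A}(X(t))$, then $Z(0)=0$ and \[ \dot X(t)=-Z(t)-\mathbb{A}(X(t)),\qquad \dot Z(t)=-\frac{1}{T-t}Z(t)-\frac{1}{T-t}\mathbb{A}(X(t)). \] Hence the Anchor ODE and the Dual-Anchor ODE are H-duals of each other.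
   Context: An ODE is in H-kernel form with kernel $H(t,s)$ if $\dot X(t)=-\int_0^tH(t,s)\mathbb{A}(X(s))\,ds$, where $\delta$ denotes the Dirac delta with the convention $\int_0^t\delta(s-t)f(s)\,ds=f(t)$. For a fixed terminal time $T$, the H-dual ODE is the one with kernel $H^A(t,s)=H(T-s,T-t)$. *)

theory Defs
  imports "HOL-Analysis.Analysis"
begin

end

theory Submission
  imports Defs
begin

lemma part1:
  fixes A :: "real ^ 'd \<Rightarrow> real ^ 'd"
    and X :: "real \<Rightarrow> real ^ 'd"
  assumes T_pos: "T > 0"
    and X_cont: "continuous_on {0..T} X"
    and X_init: "X 0 = X0"
    and X_ode: "\<And>t. t \<in> {0<..T} \<Longrightarrow>
        (X has_vector_derivative (- A (X t) + (1 / t) *\<^sub>R (X0 - X t))) (at t within {0..T})"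
    and t: "t \<in> {0<..T}"
  shows "(X has_vector_derivative
               ((1 / t\<^sup>2) *\<^sub>R integral {0..t} (\<lambda>s. s *\<^sub>R A (X s)) - A (X t)))
            (at t within {0..T})"
proof -
  define F where "F = (\<lambda>s. s *\<^sub>R (X0 - X s))"
  have ct: "continuous_on {0..t} X" using X_cont t by (auto intro: continuous_on_subset)
  have cF: "continuous_on {0..t} F" unfolding F_def
    by (intro continuous_intros ct)
  have dF: "(F has_vector_derivative (s *\<^sub>R A (X s))) (at s)" if s: "s \<in> {0<..<t}" for s
  proof -
    have sT: "s \<in> {0<..T}" using s t by auto
    have "at s within {0..T} = at s"
      using s t by (intro at_within_interior) auto
    then have dX: "(X has_vector_derivative (- A (X s) + (1 / s) *\<^sub>R (X0 - X s))) (at s)"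
      using X_ode[OF sT] by simp
    have "(F has_vector_derivative (s *\<^sub>R (0 - (- A (X s) + (1 / s) *\<^sub>R (X0 - X s))) + 1 *\<^sub>R (X0 - X s))) (at s)"
      unfolding F_def
      by (intro has_vector_derivative_scaleR has_vector_derivative_diff has_vector_derivative_const dX
           DERIV_ident)
    moreover have "s *\<^sub>R (0 - (- A (X s) + (1 / s) *\<^sub>R (X0 - X s))) + 1 *\<^sub>R (X0 - X s) = s *\<^sub>R A (X s)"
      using s by (simp add: algebra_simps)
    ultimately show ?thesis by simp
  qed
  have "((\<lambda>s. s *\<^sub>R A (X s)) has_integral (F t - F 0)) {0..t}"
    using t by (intro fundamental_theorem_of_calculus_interior cF dF) auto
  then have I: "integral {0..t} (\<lambda>s. s *\<^sub>R A (X s)) = t *\<^sub>R (X0 - X t)"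
    by (simp add: F_def integral_unique)
  have "(1 / t\<^sup>2) *\<^sub>R integral {0..t} (\<lambda>s. s *\<^sub>R A (X s)) - A (X t) = - A (X t) + (1 / t) *\<^sub>R (X0 - X t)"
    using t by (simp add: I power2_eq_square)
  then show ?thesis using X_ode[OF t] by simp
qed


lemma part2:
  fixes A :: "real ^ 'd \<Rightarrow> real ^ 'd"
    and Y :: "real \<Rightarrow> real ^ 'd"
  assumes lip: "L-lipschitz_on UNIV A"
    and T_pos: "T > 0"
    and Y_ode: "\<And>t. t \<in> {0..<T} \<Longrightarrow>
        (Y has_vector_derivative
           (integral {0..t} (\<lambda>s. ((T - t) / (T - s)\<^sup>2) *\<^sub>R A (Y s)) - A (Y t)))
        (at t within {0..<T})"
  shows "(let Z = (\<lambda>t. - vector_derivative Y (at t within {0..<T}) - A (Y t)) in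
            Z 0 = 0
          \<and> (\<forall>t\<in>{0..<T}.
               (Y has_vector_derivative (- Z t - A (Y t))) (at t within {0..<T})
             \<and> (Z has_vector_derivative
                  (- (1 / (T - t)) *\<^sub>R Z t - (1 / (T - t)) *\<^sub>R A (Y t)))
                 (at t within {0..<T})))"
proof -
  define f where "f = (\<lambda>s. (1 / (T - s)\<^sup>2) *\<^sub>R A (Y s))"
  define I where "I = (\<lambda>u. integral {0..u} f)"
  define Z where "Z = (\<lambda>t. - vector_derivative Y (at t within {0..<T}) - A (Y t))"
  have cA: "continuous_on UNIV A" using lip by (rule lipschitz_on_continuous_on)
  have cY: "continuous_on {0..<T} Y"
    unfolding continuous_on_eq_continuous_within using Y_ode has_vector_derivative_continuous by blast
  have intq: "integral {0..t} (\<lambda>s. ((T - t) / (T - s)\<^sup>2) *\<^sub>R A (Y s)) = (T - t) *\<^sub>R I t" for t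
  proof -
    have "integral {0..t} (\<lambda>s. ((T - t) / (T - s)\<^sup>2) *\<^sub>R A (Y s)) = integral {0..t} (\<lambda>s. (T - t) *\<^sub>R f s)"
      unfolding f_def by (simp add: scaleR_scaleR)
    then show ?thesis unfolding I_def by simp
  qed
  have Zeq: "Z t = - ((T - t) *\<^sub>R I t)" if t: "t \<in> {0..<T}" for t
  proof -
    have nb: "at t within {0..<T} \<noteq> bot"
      proof -
      have "t islimpt {0..<T}" using t T_pos by simp
      then show ?thesis using trivial_limit_within by blast
    qed
    have "vector_derivative Y (at t within {0..<T}) = (T - t) *\<^sub>R I t - A (Y t)"
      using vector_derivative_within[OF nb Y_ode[OF t]] by (simp add: intq)
    then show ?thesis unfolding Z_def by simp
  qed
  have Z0: "Z 0 = 0" using Zeq[of 0] T_pos by (simp add: I_def)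
  have dY: "(Y has_vector_derivative (- Z t - A (Y t))) (at t within {0..<T})" if t: "t \<in> {0..<T}" for t
    using Y_ode[OF t] Zeq[OF t] by (simp add: intq)
  have dZ: "(Z has_vector_derivative
                  (- (1 / (T - t)) *\<^sub>R Z t - (1 / (T - t)) *\<^sub>R A (Y t)))
                 (at t within {0..<T})" if t: "t \<in> {0..<T}" for t
  proof -
    define b where "b = (t + T) / 2"
    have tb: "0 \<le> t" "t < b" "b < T" using t by (auto simp: b_def)
    have cf: "continuous_on {0..b} f"
    proof -
      have "continuous_on {0..b} Y" using cY tb by (auto intro: continuous_on_subset)
      then have "continuous_on {0..b} (A \<circ> Y)"
        by (intro continuous_on_compose) (auto intro: continuous_on_subset[OF cA])
      then have "continuous_on {0..b} (\<lambda>s. A (Y s))" by (simp add: o_def)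
      moreover have "\<forall>s\<in>{0..b}. (T - s)\<^sup>2 \<noteq> 0" using tb by auto
      ultimately show ?thesis unfolding f_def
        by (intro continuous_intros) auto
    qed
    have dI0: "(I has_vector_derivative f t) (at t within {0..b})"
      unfolding I_def using tb by (intro integral_has_vector_derivative cf) auto
    have "at t within {0..b} = at t within {0..<T}"
      using tb by (intro at_within_nhd[where S="{-1<..<b}"]) auto
    with dI0 have dI: "(I has_vector_derivative f t) (at t within {0..<T})" by simp
    have dG: "((\<lambda>s. - ((T - s) *\<^sub>R I s)) has_vector_derivative
               - ((T - t) *\<^sub>R f t + (0 - 1) *\<^sub>R I t)) (at t within {0..<T})"
      by (intro has_vector_derivative_minus has_vector_derivative_scaleR dI
            derivative_intros)
    have eq: "- ((T - t) *\<^sub>R f t + (0 - 1) *\<^sub>R I t) =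
        - (1 / (T - t)) *\<^sub>R Z t - (1 / (T - t)) *\<^sub>R A (Y t)"
    proof -
      have c: "T - t \<noteq> 0" using tb by simp
      have 1: "(T - t) *\<^sub>R f t = (1 / (T - t)) *\<^sub>R A (Y t)"
        using c by (simp add: f_def scaleR_scaleR power2_eq_square)
      have 2: "- (1 / (T - t)) *\<^sub>R Z t = I t"
        using c by (simp add: Zeq[OF t] scaleR_scaleR)
      show ?thesis using 1 2 by (simp add: algebra_simps)
    qed
    show ?thesis
      by (rule has_vector_derivative_transform_within[OF dG[unfolded eq], of 1])
         (use t Zeq in auto)
  qed
  show ?thesis unfolding Z_def[symmetric] Let_def using Z0 dY dZ by blast
qed

theorem proposition7p2:
  fixes A :: "real ^ 'd \<Rightarrow> real ^ 'd"
    and X0 :: "real ^ 'd"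
    and T L :: real
    and X Y :: "real \<Rightarrow> real ^ 'd"
  assumes lip: "L-lipschitz_on UNIV A"
    and T_pos: "T > 0"
    \<comment> \<open>(i) X solves the Anchor ODE on [0,T]\<close>
    and X_cont: "continuous_on {0..T} X"
    and X_init: "X 0 = X0"
    and X_ode: "\<And>t. t \<in> {0<..T} \<Longrightarrow>
        (X has_vector_derivative (- A (X t) + (1 / t) *\<^sub>R (X0 - X t))) (at t within {0..T})"
    \<comment> \<open>(ii) Y solves the H-dual ODE of the Anchor ODE on [0,T)\<close>
    and Y_init: "Y 0 = X0"
    and Y_ode: "\<And>t. t \<in> {0..<T} \<Longrightarrow>
        (Y has_vector_derivative
           (integral {0..t} (\<lambda>s. ((T - t) / (T - s)\<^sup>2) *\<^sub>R A (Y s)) - A (Y t)))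
        (at t within {0..<T})"
  shows "(\<forall>t\<in>{0<..T}.
            (X has_vector_derivative
               ((1 / t\<^sup>2) *\<^sub>R integral {0..t} (\<lambda>s. s *\<^sub>R A (X s)) - A (X t)))
            (at t within {0..T}))
       \<and> (let Z = (\<lambda>t. - vector_derivative Y (at t within {0..<T}) - A (Y t)) in
            Z 0 = 0
          \<and> (\<forall>t\<in>{0..<T}.
               (Y has_vector_derivative (- Z t - A (Y t))) (at t within {0..<T})
             \<and> (Z has_vector_derivative
                  (- (1 / (T - t)) *\<^sub>R Z t - (1 / (T - t)) *\<^sub>R A (Y t)))
                 (at t within {0..<T})))"
  using part1[OF T_pos X_cont X_init X_ode] part2[OF lip T_pos Y_ode] by blast

end
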